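(* Suppose Assumption A holds. Then $$\mathcal D_{\mathrm{SDP}}=\Big\{(x,t)\in\mathbb R^{N}\times\mathbb R:\ \sup_{\gamma\in\Gamma} q(\gamma,x)\le 2t\Big\} \quad\text{and}\quad \mathrm{Opt}_{\mathrm{SDP}}=\min_{x\in\mathbb R^N}\ \sup_{\gamma\in\Gamma} q(\gamma,x).$$
   Context: Fix integers $N\ge 1$, $m_I,m_E\ge 0$ with $m:=m_I+m_E\ge 1$; write $[a,b]=\{a,\dots,b\}$ and $[n]=[1,n]$. For $i\in[0,m]$ let $q_i(x)=x^\top A_ix+2b_i^\top x+c_i$ with $A_i\in\mathbb S^N$ (real symmetric $N\times N$), $b_i\in\mathbb R^N$, $c_i\in\mathbb R$. The QCQP is $\mathrm{Opt}:=\inf\{q_0(x): q_i(x)\le 0\ \forall i\in[m_I],\ q_i(x)=0\ \forall i\in[m_I+1,m]\}$. Let $Q_i=\begin{pmatrix}c_i& b_i^\top\\ b_i& A_i\end{pmatrix}\in\mathbb S^{N+1}$. The SDP relaxation is $\mathrm{Opt}_{\mathrm{SDP}}:=\inf\{\langle Q_0,Y\rangle : Y=\begin{pmatrix}1&x^\top\\ x& X\end{pmatrix},\ x\in\mathbb R^N,\ X\in\mathbb S^N,\ \langle Q_i,Y\rangle\le 0\ \forall i\in[m_I],\ \langle Q_i,Y\rangle=0\ \forall i\in[m_I+1,m],\ Y\succeq 0\}$, where $\langle\cdot,\cdot\rangle$ is the trace inner product, and $\mathcal D_{\mathrm{SDP}}:=\{(x,t)\in\mathbb R^{N+1}:\exists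 X\in\mathbb S^N$ such that $Y=\begin{pmatrix}1&x^\top\\ x& X\end{pmatrix}$ satisfies $\langle Q_0,Y\rangle\le 2t$, $\langle Q_i,Y\rangle\le 0\ \forall i\in[m_I]$, $\langle Q_i,Y\rangle= 0\ \forall i\in[m_I+1,m]$, $Y\succeq 0\}$. For $\gamma\in\mathbb R^m$ set $A(\gamma)=A_0+\sum_{i=1}^m\gamma_iA_i$ and $q(\gamma,x)=q_0(x)+\sum_{i=1}^m\gamma_iq_i(x)$. Let $\Gamma:=\{\gamma\in\mathbb R^m: A(\gamma)\succeq 0,\ \gamma_i\ge 0\ \forall i\in[m_I]\}$. Assumption A: the feasible set of the QCQP is nonempty and there is $\gamma^*\in\mathbb R^m$ with $\gamma^*_i\ge0$ for all $i\in[m_I]$ and $A(\gamma^* )\succ 0$. *)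

theory Defs
  imports "HOL-Analysis.Analysis" "HOL-Library.Extended_Real"
begin

text \<open>Vectors in R^N are real^'n; matrices in S^N are real^'n^'n.
  The (N+1)x(N+1) block matrices are indexed by 'n option, with None the extra
  (first) row/column.\<close>

definition sym_mat :: "real^'k^'k \<Rightarrow> bool" where
  "sym_mat M \<longleftrightarrow> transpose M = M"

definition psd :: "real^'k^'k \<Rightarrow> bool" where
  "psd M \<longleftrightarrow> sym_mat M \<and> (\<forall>v. 0 \<le> v \<bullet> (M *v v))"

definition pd :: "real^'k^'k \<Rightarrow> bool" where
  "pd M \<longleftrightarrow> sym_mat M \<and> (\<forall>v. v \<noteq> 0 \<longrightarrow> 0 < v \<bullet> (M *v v))"

definition blk :: "real \<Rightarrow> real^'n \<Rightarrow> real^'n^'n \<Rightarrow> real^('n option)^('n option)" where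
  "blk c b A = (\<chi> i j. case i of
       None \<Rightarrow> (case j of None \<Rightarrow> c | Some j' \<Rightarrow> b $ j')
     | Some i' \<Rightarrow> (case j of None \<Rightarrow> b $ i' | Some j' \<Rightarrow> A $ i' $ j'))"

definition frob :: "real^'k^'k \<Rightarrow> real^'k^'k \<Rightarrow> real" where
  "frob M Y = (\<Sum>i\<in>UNIV. \<Sum>j\<in>UNIV. M $ i $ j * Y $ i $ j)"

definition qf :: "real^'n^'n \<Rightarrow> real^'n \<Rightarrow> real \<Rightarrow> real^'n \<Rightarrow> real" where
  "qf A b c x = x \<bullet> (A *v x) + 2 * (b \<bullet> x) + c"

text \<open>Data: constraints are indexed by i in [0,m], m = mI + mE;
  inequalities are i in [1,mI], equalities i in [mI+1,m].\<close>

definition Qmat :: "(nat \<Rightarrow> real^'n^'n) \<Rightarrow> (nat \<Rightarrow> real^'n) \<Rightarrow> (nat \<Rightarrow> real) \<Rightarrow> nat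
   \<Rightarrow> real^('n option)^('n option)" where
  "Qmat A b c i = blk (c i) (b i) (A i)"

definition sdp_feas :: "nat \<Rightarrow> nat \<Rightarrow> (nat \<Rightarrow> real^'n^'n) \<Rightarrow> (nat \<Rightarrow> real^'n) \<Rightarrow> (nat \<Rightarrow> real)
   \<Rightarrow> real^'n \<Rightarrow> real^'n^'n \<Rightarrow> bool" where
  "sdp_feas mI mE A b c x X \<longleftrightarrow> sym_mat X
     \<and> (\<forall>i\<in>{1..mI}. frob (Qmat A b c i) (blk 1 x X) \<le> 0)
     \<and> (\<forall>i\<in>{mI+1..mI+mE}. frob (Qmat A b c i) (blk 1 x X) = 0)
     \<and> psd (blk 1 x X)"

definition Opt_SDP :: "nat \<Rightarrow> nat \<Rightarrow> (nat \<Rightarrow> real^'n^'n) \<Rightarrow> (nat \<Rightarrow> real^'n) \<Rightarrow> (nat \<Rightarrow> real)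
   \<Rightarrow> ereal" where
  "Opt_SDP mI mE A b c = Inf {ereal (frob (Qmat A b c 0) (blk 1 x X)) | x X. sdp_feas mI mE A b c x X}"

definition D_SDP :: "nat \<Rightarrow> nat \<Rightarrow> (nat \<Rightarrow> real^'n^'n) \<Rightarrow> (nat \<Rightarrow> real^'n) \<Rightarrow> (nat \<Rightarrow> real)
   \<Rightarrow> ((real^'n) \<times> real) set" where
  "D_SDP mI mE A b c = {(x, t). \<exists>X. sdp_feas mI mE A b c x X
       \<and> frob (Qmat A b c 0) (blk 1 x X) \<le> 2 * t}"

definition Amat :: "nat \<Rightarrow> (nat \<Rightarrow> real^'n^'n) \<Rightarrow> (nat \<Rightarrow> real) \<Rightarrow> real^'n^'n" where
  "Amat m A \<gamma> = A 0 + (\<Sum>i\<in>{1..m}. \<gamma> i *\<^sub>R A i)"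

definition qgam :: "nat \<Rightarrow> (nat \<Rightarrow> real^'n^'n) \<Rightarrow> (nat \<Rightarrow> real^'n) \<Rightarrow> (nat \<Rightarrow> real)
   \<Rightarrow> (nat \<Rightarrow> real) \<Rightarrow> real^'n \<Rightarrow> real" where
  "qgam m A b c \<gamma> x = qf (A 0) (b 0) (c 0) x + (\<Sum>i\<in>{1..m}. \<gamma> i * qf (A i) (b i) (c i) x)"

text \<open>Gamma, with gamma in R^m represented as a function nat => real vanishing outside [1,m].\<close>
definition Gam :: "nat \<Rightarrow> nat \<Rightarrow> (nat \<Rightarrow> real^'n^'n) \<Rightarrow> (nat \<Rightarrow> real) set" where
  "Gam mI mE A = {\<gamma>. (\<forall>i. i \<notin> {1..mI+mE} \<longrightarrow> \<gamma> i = 0)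
       \<and> psd (Amat (mI+mE) A \<gamma>) \<and> (\<forall>i\<in>{1..mI}. 0 \<le> \<gamma> i)}"

definition supq :: "nat \<Rightarrow> nat \<Rightarrow> (nat \<Rightarrow> real^'n^'n) \<Rightarrow> (nat \<Rightarrow> real^'n) \<Rightarrow> (nat \<Rightarrow> real)
   \<Rightarrow> real^'n \<Rightarrow> ereal" where
  "supq mI mE A b c x = (SUP \<gamma>\<in>Gam mI mE A. ereal (qgam (mI+mE) A b c \<gamma> x))"

end

theory Submission
  imports Defs
begin

definition outer :: "real^'n \<Rightarrow> real^'n^'n" where
  "outer v = (\<chi> i j. v$i * v$j)"

lemma frob_comm: "frob M Y = frob Y M"
  unfolding frob_def by (simp add: mult.commute)

lemma frob_add_left: "frob (M + N) Y = frob M Y + frob N Y"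
  unfolding frob_def by (simp add: algebra_simps sum.distrib)
lemma frob_add_right: "frob Y (M + N) = frob Y M + frob Y N"
  unfolding frob_def by (simp add: algebra_simps sum.distrib)
lemma frob_diff_left: "frob (M - N) Y = frob M Y - frob N Y"
  unfolding frob_def by (simp add: algebra_simps sum_subtractf)
lemma frob_diff_right: "frob Y (M - N) = frob Y M - frob Y N"
  unfolding frob_def by (simp add: algebra_simps sum_subtractf)
lemma frob_scaleR_left: "frob (c *\<^sub>R M) Y = c * frob M Y"
  unfolding frob_def by (simp add: algebra_simps sum_distrib_left)
lemma frob_scaleR_right: "frob Y (c *\<^sub>R M) = c * frob Y M"
  unfolding frob_def by (simp add: algebra_simps sum_distrib_left)
lemma frob_minus_right: "frob Y (- M) = - frob Y M"
  unfolding frob_def by (simp add: sum_negf)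
lemma frob_zero_left[simp]: "frob 0 Y = 0"
  unfolding frob_def by simp
lemma frob_zero_right[simp]: "frob Y 0 = 0"
  unfolding frob_def by simp
lemma frob_sum_left: "frob (\<Sum>i\<in>S. f i) Y = (\<Sum>i\<in>S. frob (f i) Y)"
  by (induction S rule: infinite_finite_induct) (auto simp: frob_add_left)

lemma inner_frob: "(Y::real^'n^'n) \<bullet> W = frob Y W"
  unfolding frob_def inner_vec_def by simp

lemma quad_frob: "v \<bullet> (M *v v) = frob M (outer v)"
  unfolding frob_def inner_vec_def matrix_vector_mult_def outer_def
  by (simp add: sum_distrib_left algebra_simps)

lemma frob_transpose: "frob (transpose M) Y = frob M (transpose Y)"
  unfolding frob_def transpose_def by (simp, subst sum.swap, simp add: mult.commute)

lemma frob_sym_transpose: "sym_mat M \<Longrightarrow> frob M (transpose Y) = frob M Y"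
  by (metis frob_transpose sym_mat_def)

lemma frob_outer_outer: "frob (outer x) (outer w) = (x \<bullet> w)^2"
proof -
  have "(x \<bullet> w)^2 = (\<Sum>i\<in>UNIV. x$i * w$i) * (\<Sum>j\<in>UNIV. x$j * w$j)"
    unfolding inner_vec_def power2_eq_square by simp
  also have "\<dots> = (\<Sum>i\<in>UNIV. \<Sum>j\<in>UNIV. (x$i * w$i) * (x$j * w$j))"
    by (rule sum_product)
  finally show ?thesis unfolding frob_def outer_def by (simp add: mult_ac)
qed

lemma transpose_add: "transpose (A + B) = transpose A + transpose (B::real^'n^'n)"
  by (simp add: vec_eq_iff transpose_def)
lemma transpose_diff: "transpose (A - B) = transpose A - transpose (B::real^'n^'n)"
  by (simp add: vec_eq_iff transpose_def)
lemma sym_outer: "sym_mat (outer x)"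
  by (simp add: sym_mat_def vec_eq_iff transpose_def outer_def mult.commute)
lemma sym_add: "sym_mat A \<Longrightarrow> sym_mat B \<Longrightarrow> sym_mat (A + B)"
  by (simp add: sym_mat_def transpose_add)
lemma sym_diff: "sym_mat A \<Longrightarrow> sym_mat B \<Longrightarrow> sym_mat (A - B)"
  by (simp add: sym_mat_def transpose_diff)
lemma sym_scaleR: "sym_mat A \<Longrightarrow> sym_mat (c *\<^sub>R A)"
  by (simp add: sym_mat_def transpose_scalar)
lemma sym_sum: "(\<And>i. i \<in> S \<Longrightarrow> sym_mat (f i)) \<Longrightarrow> sym_mat (\<Sum>i\<in>S. f i)"
  by (induction S rule: infinite_finite_induct)
     (auto simp: sym_add sym_mat_def transpose_def vec_eq_iff)

lemma sum_option: fixes f :: "'n::finite option \<Rightarrow> 'a::comm_monoid_add"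
  shows "(\<Sum>j\<in>(UNIV::'n option set). f j) = f None + (\<Sum>i\<in>UNIV. f (Some i))"
proof -
  have "sum f UNIV = sum f (insert None (range Some))" by (metis UNIV_option_conv)
  also have "\<dots> = f None + sum f (range Some)" by (rule sum.insert) auto
  also have "sum f (range Some) = (\<Sum>i\<in>UNIV. f (Some i))" by (simp add: sum.reindex)
  finally show ?thesis .
qed

lemma frob_blk: "frob (blk c b A) (blk c' b' A') = c*c' + 2*(b \<bullet> b') + frob A A'"
  unfolding frob_def blk_def inner_vec_def
  by (simp add: sum_option sum.distrib algebra_simps sum_distrib_left mult.commute)

lemma outer_blk: "outer v = blk (v$None * v$None) ((v$None) *\<^sub>R (\<chi> i. v$Some i)) (outer (\<chi> i. v$Some i))"
  unfolding outer_def blk_def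
  by (simp add: vec_eq_iff split: option.splits)

lemma sym_blk: "sym_mat (blk c b A) \<longleftrightarrow> sym_mat A"
  unfolding sym_mat_def blk_def transpose_def
  by (auto simp: vec_eq_iff split: option.splits)

lemma quad_blk: "v \<bullet> (blk 1 x X *v v) = (v$None)^2 + 2 * v$None * (x \<bullet> (\<chi> i. v$Some i)) + frob X (outer (\<chi> i. v$Some i))"
  unfolding quad_frob outer_blk[of v] frob_blk
  by (simp add: power2_eq_square)

lemma quad_diff_outer: "w \<bullet> ((X - outer x) *v w) = frob X (outer w) - (x \<bullet> w)^2"
  unfolding quad_frob frob_diff_left frob_outer_outer ..

lemma psd_blk_iff: fixes x :: "real^'n" shows "psd (blk 1 x X) \<longleftrightarrow> sym_mat X \<and> psd (X - outer x)"
proof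
  assume h: "psd (blk 1 x X)"
  then have sX: "sym_mat X" by (simp add: psd_def sym_blk)
  have "0 \<le> w \<bullet> ((X - outer x) *v w)" for w
  proof -
    define v :: "real^('n option)" where "v = (\<chi> j. case j of None \<Rightarrow> -(x \<bullet> w) | Some i \<Rightarrow> w$i)"
    have "(\<chi> i. v$Some i) = w" by (simp add: v_def vec_eq_iff)
    moreover have "v$None = -(x \<bullet> w)" by (simp add: v_def)
    ultimately have "v \<bullet> (blk 1 x X *v v) = w \<bullet> ((X - outer x) *v w)"
      unfolding quad_blk quad_diff_outer by (simp add: power2_eq_square)
    with h show ?thesis unfolding psd_def by metis
  qed
  with sX show "sym_mat X \<and> psd (X - outer x)"
    by (simp add: psd_def sym_diff sym_outer)
next
  assume h: "sym_mat X \<and> psd (X - outer x)"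
  have "0 \<le> v \<bullet> (blk 1 x X *v v)" for v
  proof -
    define w where "w = (\<chi> i. v$Some i)"
    have "0 \<le> w \<bullet> ((X - outer x) *v w)" using h by (simp add: psd_def)
    then have "0 \<le> frob X (outer w) - (x \<bullet> w)^2" by (simp add: quad_diff_outer)
    moreover have "v \<bullet> (blk 1 x X *v v) = (v$None + x \<bullet> w)^2 + (frob X (outer w) - (x \<bullet> w)^2)"
      unfolding quad_blk w_def by (simp add: power2_eq_square algebra_simps)
    ultimately show ?thesis by (metis add_nonneg_nonneg zero_le_power2)
  qed
  with h show "psd (blk 1 x X)" by (simp add: psd_def sym_blk)
qed

definition quadS :: "('a \<Rightarrow> 'a \<Rightarrow> real) \<Rightarrow> 'a set \<Rightarrow> ('a \<Rightarrow> real) \<Rightarrow> real" where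
  "quadS M S w = (\<Sum>i\<in>S. \<Sum>j\<in>S. w i * M i j * w j)"

lemma dsum_insert:
  assumes "finite S" "k \<notin> S"
  shows "(\<Sum>i\<in>insert k S. \<Sum>j\<in>insert k S. g i j) =
    g k k + (\<Sum>j\<in>S. g k j) + (\<Sum>i\<in>S. g i k) + (\<Sum>i\<in>S. \<Sum>j\<in>S. g i j)"
  using assms by (simp add: sum.distrib add_ac)

lemma quadS_insert:
  assumes "finite S" "k \<notin> S"
  shows "quadS M (insert k S) w = w k * w k * M k k + w k * (\<Sum>j\<in>S. M k j * w j)
     + w k * (\<Sum>i\<in>S. w i * M i k) + quadS M S w"
  unfolding quadS_def dsum_insert[OF assms]
  by (simp add: sum_distrib_left sum_distrib_right algebra_simps)

lemma quadS_cong: "(\<And>i. i \<in> S \<Longrightarrow> v i = w i) \<Longrightarrow> quadS M S v = quadS M S w"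
  unfolding quadS_def by simp

lemma psd_pair_gen:
  assumes "finite S"
  shows "\<forall>M Z. (\<forall>i j. M i j = M j i) \<longrightarrow> (\<forall>v. 0 \<le> quadS M S v) \<longrightarrow> (\<forall>v. 0 \<le> quadS Z S v)
      \<longrightarrow> 0 \<le> (\<Sum>i\<in>S. \<Sum>j\<in>S. M i j * Z i j)"
  using assms
proof (induction S rule: finite_induct)
  case empty
  then show ?case by simp
next
  case (insert k S)
  show ?case
  proof (intro allI impI)
    fix M Z :: "'a \<Rightarrow> 'a \<Rightarrow> real"
    assume symM: "\<forall>i j. M i j = M j i" and pM: "\<forall>v. 0 \<le> quadS M (insert k S) v"
      and pZ: "\<forall>v. 0 \<le> quadS Z (insert k S) v"
    let ?L = "\<lambda>v. \<Sum>j\<in>S. M k j * v j"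
    have symsum: "(\<Sum>i\<in>S. v i * M i k) = ?L v" for v
      using symM by (simp add: mult.commute)
    have Mform: "quadS M (insert k S) (v(k := s)) = s * s * M k k + 2 * s * ?L v + quadS M S v" for v s
    proof -
      have "quadS M S (v(k := s)) = quadS M S v" by (rule quadS_cong) (use insert in auto)
      moreover have "(\<Sum>j\<in>S. M k j * (v(k := s)) j) = ?L v" by (rule sum.cong) (use insert in auto)
      moreover have "(\<Sum>i\<in>S. (v(k := s)) i * M i k) = (\<Sum>i\<in>S. v i * M i k)"
        by (rule sum.cong) (use insert in auto)
      ultimately show ?thesis unfolding quadS_insert[OF insert.hyps] symsum by simp
    qed
    have pZS: "\<forall>v. 0 \<le> quadS Z S v"
    proof
      fix v
      have "quadS Z (insert k S) (v(k := 0)) = quadS Z S (v(k:=0))"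
        unfolding quadS_insert[OF insert.hyps] by simp
      also have "\<dots> = quadS Z S v" by (rule quadS_cong) (use insert in auto)
      finally show "0 \<le> quadS Z S v" using pZ by metis
    qed
    have Mkk: "0 \<le> M k k" using pM[rule_format, of "(\<lambda>_. 0)(k := 1)"] Mform[of "\<lambda>_. 0" 1]
      by (simp add: quadS_def)
    have full: "(\<Sum>i\<in>insert k S. \<Sum>j\<in>insert k S. M i j * Z i j) =
       M k k * Z k k + (\<Sum>j\<in>S. M k j * Z k j) + (\<Sum>i\<in>S. M k i * Z i k) + (\<Sum>i\<in>S. \<Sum>j\<in>S. M i j * Z i j)"
      unfolding dsum_insert[OF insert.hyps] using symM by simp
    show "0 \<le> (\<Sum>i\<in>insert k S. \<Sum>j\<in>insert k S. M i j * Z i j)"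
    proof (cases "M k k = 0")
      case True
      have L0: "?L v = 0" for v
      proof (rule ccontr)
        assume ne: "?L v \<noteq> 0"
        define s where "s = - (\<bar>quadS M S v\<bar> + 1) / (2 * ?L v)"
        have "2 * s * ?L v = - (\<bar>quadS M S v\<bar> + 1)" using ne by (simp add: s_def)
        then have "quadS M (insert k S) (v(k := s)) < 0" unfolding Mform True by simp
        with pM show False by (metis not_le)
      qed
      have "(\<Sum>j\<in>S. M k j * Z k j) = 0" using L0[of "\<lambda>j. Z k j"] by simp
      moreover have "(\<Sum>i\<in>S. M k i * Z i k) = 0" using L0[of "\<lambda>j. Z j k"] by simp
      moreover have symMS: "\<forall>i j. M i j = M j i" using symM by blast
      have pMS: "\<forall>v. 0 \<le> quadS M S v"
      proof
        fix v show "0 \<le> quadS M S v" using pM[rule_format, of "v(k:=0)"] Mform[of v 0] by simp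
      qed
      ultimately show ?thesis unfolding full True
        using insert.IH symMS pMS pZS by simp
    next
      case False
      with Mkk have Mpos: "0 < M k k" by simp
      define M' where "M' = (\<lambda>i j. M i j - M i k * M k j / M k k)"
      have symM': "\<forall>i j. M' i j = M' j i" unfolding M'_def using symM by (simp add: mult.commute)
      have pM': "\<forall>v. 0 \<le> quadS M' S v"
      proof
        fix v
        have q1: "quadS M' S v = quadS M S v - (\<Sum>i\<in>S. \<Sum>j\<in>S. (v i * M i k) * (M k j * v j)) / M k k"
          unfolding quadS_def M'_def
          by (simp add: algebra_simps sum_subtractf sum_divide_distrib)
        have "(\<Sum>i\<in>S. \<Sum>j\<in>S. (v i * M i k) * (M k j * v j)) = (\<Sum>i\<in>S. v i * M i k) * ?L v"
          by (simp add: sum_product)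
        also have "\<dots> = ?L v * ?L v" using symsum[of v] by simp
        finally have q2: "quadS M' S v = quadS M S v - ?L v * ?L v / M k k" using q1 by simp
        define s where "s = - ?L v / M k k"
        have "quadS M (insert k S) (v(k := s)) = quadS M S v - ?L v * ?L v / M k k"
          unfolding Mform s_def using Mpos by (simp add: field_simps power2_eq_square)
        then show "0 \<le> quadS M' S v" using q2 pM by metis
      qed
      have IH': "0 \<le> (\<Sum>i\<in>S. \<Sum>j\<in>S. M' i j * Z i j)"
        using insert.IH symM' pM' pZS by blast
      define u where "u = (\<lambda>i. M k i)"
      have Zu: "0 \<le> quadS Z (insert k S) u" using pZ by blast
      have qZu0: "quadS Z (insert k S) u = M k k * (M k k * Z k k + (\<Sum>j\<in>S. M k j * Z k j)
           + (\<Sum>i\<in>S. M k i * Z i k)) + (\<Sum>i\<in>S. \<Sum>j\<in>S. (M k i * M k j) * Z i j)"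
        unfolding quadS_insert[OF insert.hyps] unfolding u_def quadS_def
        by (simp add: algebra_simps sum_distrib_left)
      have "(\<Sum>i\<in>S. \<Sum>j\<in>S. (M k i * M k j) * Z i j) = (\<Sum>i\<in>S. \<Sum>j\<in>S. (M i k * M k j) * Z i j)"
        by (rule sum.cong[OF refl], rule sum.cong[OF refl]) (metis symM)
      with qZu0 have qZu: "quadS Z (insert k S) u = M k k * (M k k * Z k k + (\<Sum>j\<in>S. M k j * Z k j)
           + (\<Sum>i\<in>S. M k i * Z i k)) + (\<Sum>i\<in>S. \<Sum>j\<in>S. (M i k * M k j) * Z i j)"
        by simp
      have splitMZ: "(\<Sum>i\<in>S. \<Sum>j\<in>S. M i j * Z i j) = (\<Sum>i\<in>S. \<Sum>j\<in>S. M' i j * Z i j)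
          + (\<Sum>i\<in>S. \<Sum>j\<in>S. (M i k * M k j) * Z i j) / M k k"
        unfolding M'_def using Mpos
        by (simp add: algebra_simps sum_subtractf sum_divide_distrib sum.distrib)
      have "(\<Sum>i\<in>insert k S. \<Sum>j\<in>insert k S. M i j * Z i j)
          = (\<Sum>i\<in>S. \<Sum>j\<in>S. M' i j * Z i j) + quadS Z (insert k S) u / M k k"
        unfolding full splitMZ qZu using Mpos by (simp add: field_simps)
      then show ?thesis using IH' Zu Mpos by simp
    qed
  qed
qed

lemma quadS_vec: "quadS (\<lambda>i j. M$i$j) UNIV v = (\<chi> i. v i) \<bullet> (M *v (\<chi> i. v i))"
  unfolding quad_frob quadS_def frob_def outer_def by (simp add: algebra_simps)

lemma psd_frob_nonneg:
  fixes M Z :: "real^'n^'n"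
  assumes "psd M" "\<forall>v. 0 \<le> v \<bullet> (Z *v v)"
  shows "0 \<le> frob M Z"
proof -
  have "\<forall>i j. M$i$j = M$j$i" using assms(1) unfolding psd_def sym_mat_def transpose_def
    by (metis vec_lambda_beta)
  moreover have "\<forall>v. 0 \<le> quadS (\<lambda>i j. M$i$j) UNIV v" using assms(1) by (simp add: quadS_vec psd_def)
  moreover have "\<forall>v. 0 \<le> quadS (\<lambda>i j. Z$i$j) UNIV v" using assms(2) by (simp add: quadS_vec)
  ultimately have "0 \<le> (\<Sum>i\<in>UNIV. \<Sum>j\<in>UNIV. M$i$j * Z$i$j)"
    using psd_pair_gen[of "UNIV::'n set", rule_format, of "\<lambda>i j. M$i$j" "\<lambda>i j. Z$i$j"] by simp
  then show ?thesis unfolding frob_def .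
qed

lemma frob_Amat: "frob (Amat m A \<gamma>) Z = frob (A 0) Z + (\<Sum>i\<in>{1..m}. \<gamma> i * frob (A i) Z)"
  unfolding Amat_def by (simp add: frob_add_left frob_sum_left frob_scaleR_left)

lemma quad_Amat: "v \<bullet> (Amat m A \<gamma> *v v) = v \<bullet> (A 0 *v v) + (\<Sum>i\<in>{1..m}. \<gamma> i * (v \<bullet> (A i *v v)))"
  unfolding quad_frob frob_Amat ..

lemma sym_Amat: "\<forall>i\<in>{0..m}. sym_mat (A i) \<Longrightarrow> sym_mat (Amat m A \<gamma>)"
  unfolding Amat_def by (auto intro!: sym_add sym_sum sym_scaleR)

lemma frob_Qmat: "frob (Qmat A b c i) (blk 1 x X) = qf (A i) (b i) (c i) x + frob (A i) (X - outer x)"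
  unfolding Qmat_def frob_blk qf_def quad_frob frob_diff_right by simp

lemma quad_scale: fixes P :: "real^'n^'n" shows "(c *\<^sub>R v) \<bullet> (P *v (c *\<^sub>R v)) = c^2 * (v \<bullet> (P *v v))"
proof -
  have "P *v (c *\<^sub>R v) = c *\<^sub>R (P *v v)"
    by (simp add: vec_eq_iff matrix_vector_mult_def sum_distrib_left algebra_simps)
  then show ?thesis by (simp add: power2_eq_square)
qed

lemma pd_uniform:
  fixes P :: "real^'n^'n"
  assumes "pd P"
  obtains \<mu> where "\<mu> > 0" "\<And>v. \<mu> * (v \<bullet> v) \<le> v \<bullet> (P *v v)"
proof -
  let ?f = "\<lambda>v::real^'n. v \<bullet> (P *v v)"
  have cont: "continuous_on (sphere 0 1) ?f"
    by (intro continuous_intros matrix_vector_mult_linear_continuous_on)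
  have "sphere (0::real^'n) 1 \<noteq> {}" by (simp add: sphere_eq_empty)
  then obtain v0 where v0: "v0 \<in> sphere 0 1" "\<And>v. v \<in> sphere 0 1 \<Longrightarrow> ?f v0 \<le> ?f v"
    using continuous_attains_inf[OF compact_sphere _ cont] by blast
  have "v0 \<noteq> 0" using v0(1) by auto
  then have mpos: "?f v0 > 0" using assms by (simp add: pd_def)
  show ?thesis
  proof (rule that[OF mpos])
    fix v :: "real^'n"
    show "?f v0 * (v \<bullet> v) \<le> ?f v"
    proof (cases "v = 0")
      case True then show ?thesis by simp
    next
      case False
      define u where "u = (1 / norm v) *\<^sub>R v"
      have "u \<in> sphere 0 1" using False by (simp add: u_def)
      then have "?f v0 \<le> ?f u" by (rule v0(2))
      have vu: "v = norm v *\<^sub>R u" using False by (simp add: u_def)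
      have "?f v = (norm v)^2 * ?f u" by (subst vu, subst vu, rule quad_scale)
      moreover have "v \<bullet> v = (norm v)^2" by (simp add: power2_norm_eq_inner)
      ultimately show ?thesis using \<open>?f v0 \<le> ?f u\<close>
        by (metis mult.commute mult_right_mono zero_le_power2)
    qed
  qed
qed

lemma quad_bound:
  fixes Y :: "real^'n^'n"
  obtains B where "B > 0" "\<And>v. \<bar>v \<bullet> (Y *v v)\<bar> \<le> B * (v \<bullet> v)"
proof -
  obtain B where B: "B > 0" "\<And>x. norm (Y *v x) \<le> B * norm x"
    using linear_bounded_pos[OF matrix_vector_mul_linear] by blast
  show ?thesis
  proof (rule that[OF B(1)])
    fix v :: "real^'n"
    have "\<bar>v \<bullet> (Y *v v)\<bar> \<le> norm v * norm (Y *v v)" by (rule Cauchy_Schwarz_ineq2)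
    also have "\<dots> \<le> norm v * (B * norm v)" by (rule mult_left_mono[OF B(2)]) simp
    also have "\<dots> = B * (v \<bullet> v)" by (simp add: power2_norm_eq_inner[symmetric] power2_eq_square)
    finally show "\<bar>v \<bullet> (Y *v v)\<bar> \<le> B * (v \<bullet> v)" .
  qed
qed

lemma sym_transpose_add: "sym_mat (Y + transpose (Y::real^'n^'n))"
  by (simp add: sym_mat_def transpose_add add.commute)

lemma transpose_outer: "transpose (outer v) = outer v"
  using sym_outer sym_mat_def by metis

lemma dual_attain:
  fixes A :: "nat \<Rightarrow> real^'n^'n" and r :: "nat \<Rightarrow> real" and g :: "nat \<Rightarrow> real"
  assumes symA: "\<forall>i\<in>{0..m}. sym_mat (A i)"
    and mI: "mI \<le> m"
    and gI: "\<forall>i\<in>{1..mI}. 0 \<le> g i"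
    and gpd: "pd (Amat m A g)"
    and hyp: "\<And>l. 0 \<le> l 0 \<Longrightarrow> (\<forall>i\<in>{1..mI}. 0 \<le> l i) \<Longrightarrow> psd (\<Sum>i\<in>{0..m}. l i *\<^sub>R A i)
                 \<Longrightarrow> 0 \<le> (\<Sum>i\<in>{0..m}. l i * r i)"
  shows "\<exists>Z. psd Z \<and> frob (A 0) Z \<le> r 0 \<and> (\<forall>i\<in>{1..mI}. frob (A i) Z \<le> r i)
             \<and> (\<forall>i\<in>{mI+1..m}. frob (A i) Z = r i)"
proof -
  define L where "L = {l::nat\<Rightarrow>real. 0 \<le> l 0 \<and> (\<forall>i\<in>{1..mI}. 0 \<le> l i)}"
  define F where "F = (\<lambda>l::nat\<Rightarrow>real. ((\<Sum>i\<in>{0..m}. l i *\<^sub>R A i), (\<Sum>i\<in>{0..m}. l i * r i)))"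
  define G where "G = F ` L"
  define T where "T = {p::((real^'n^'n) \<times> real). (\<forall>v. 0 \<le> frob (fst p) (outer v)) \<and> snd p < 0}"
  have Fscale: "F (\<lambda>i. k * l i) = (k *\<^sub>R fst (F l), k * snd (F l))" for k l
    unfolding F_def by (simp add: scaleR_sum_right sum_distrib_left mult.assoc)
  have Fadd: "F (\<lambda>i. l1 i + l2 i) = (fst (F l1) + fst (F l2), snd (F l1) + snd (F l2))" for l1 l2
    unfolding F_def by (simp add: scaleR_add_left sum.distrib algebra_simps)
  have convG: "convex G"
  proof (rule convexI)
    fix x y and u v :: real
    assume x: "x \<in> G" and y: "y \<in> G" and u: "0 \<le> u" and v: "0 \<le> v" and uv: "u + v = 1"
    obtain l1 where l1: "l1 \<in> L" "x = F l1" using x G_def by blast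
    obtain l2 where l2: "l2 \<in> L" "y = F l2" using y G_def by blast
    have "u *\<^sub>R x + v *\<^sub>R y = F (\<lambda>i. u * l1 i + v * l2 i)"
      using Fadd[of "\<lambda>i. u * l1 i" "\<lambda>i. v * l2 i"] Fscale[of u l1] Fscale[of v l2] l1 l2
      by (simp add: prod_eq_iff)
    moreover have "(\<lambda>i. u * l1 i + v * l2 i) \<in> L" using l1 l2 u v by (simp add: L_def)
    ultimately show "u *\<^sub>R x + v *\<^sub>R y \<in> G" unfolding G_def by simp
  qed
  have convT: "convex T"
  proof (rule convexI)
    fix x y and u v :: real
    assume x: "x \<in> T" and y: "y \<in> T" and u: "0 \<le> u" and v: "0 \<le> v" and uv: "u + v = 1"
    have "0 \<le> frob (fst (u *\<^sub>R x + v *\<^sub>R y)) (outer w)" for w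
      using x y u v by (simp add: T_def frob_add_left frob_scaleR_left)
    moreover have "snd (u *\<^sub>R x + v *\<^sub>R y) < 0"
    proof -
      have sx: "snd x < 0" and sy: "snd y < 0" using x y by (auto simp: T_def)
      show ?thesis
      proof (cases "u = 0")
        case True then have "v = 1" using uv by simp
        then show ?thesis using True sy by simp
      next
        case False then have "u * snd x < 0" using u sx by (simp add: mult_pos_neg)
        moreover have "v * snd y \<le> 0" using v sy by (simp add: mult_nonneg_nonpos)
        ultimately show ?thesis by simp
      qed
    qed
    ultimately show "u *\<^sub>R x + v *\<^sub>R y \<in> T" by (simp add: T_def)
  qed
  have F0: "F (\<lambda>_. 0) = (0, 0)" unfolding F_def by simp
  have GnE: "G \<noteq> {}" unfolding G_def L_def by auto
  have TnE: "(0, -1) \<in> T" unfolding T_def by simp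
  have sumsym: "sym_mat (fst (F l))" for l
    unfolding F_def using symA by (auto intro!: sym_sum sym_scaleR)
  have disj: "G \<inter> T = {}"
  proof (rule ccontr)
    assume "G \<inter> T \<noteq> {}"
    then obtain l where l: "l \<in> L" "F l \<in> T" unfolding G_def by blast
    have "psd (fst (F l))" using l(2) sumsym[of l] by (simp add: T_def psd_def quad_frob)
    then have "0 \<le> snd (F l)" using hyp[of l] l(1) by (simp add: L_def F_def)
    then show False using l(2) by (simp add: T_def)
  qed
  obtain a b where ab: "a \<noteq> 0" "\<forall>x\<in>G. a \<bullet> x \<le> b" "\<forall>x\<in>T. b \<le> a \<bullet> x"
    using separating_hyperplane_sets[OF convG convT GnE _ disj] TnE by blast
  obtain Y \<tau> where a: "a = (Y, \<tau>)" by (cases a)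
  have ax: "a \<bullet> p = frob Y (fst p) + \<tau> * snd p" for p
    unfolding a by (cases p) (simp add: inner_Pair inner_frob)
  have b0: "0 \<le> b" using ab(2) F0 unfolding G_def L_def ax by force
  have gle: "frob Y (fst (F l)) + \<tau> * snd (F l) \<le> 0" if l: "l \<in> L" for l
  proof (rule ccontr)
    assume "\<not> ?thesis"
    then have vpos: "frob Y (fst (F l)) + \<tau> * snd (F l) > 0" by simp
    define k where "k = (b + 1) / (frob Y (fst (F l)) + \<tau> * snd (F l))"
    have kpos: "k > 0" using vpos b0 by (simp add: k_def)
    have "(\<lambda>i. k * l i) \<in> L" using l kpos by (simp add: L_def)
    then have "a \<bullet> F (\<lambda>i. k * l i) \<le> b" using ab(2) G_def by blast
    moreover have "a \<bullet> F (\<lambda>i. k * l i) = k * (frob Y (fst (F l)) + \<tau> * snd (F l))"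
      unfolding Fscale ax by (simp add: frob_scaleR_right algebra_simps)
    moreover have "k * (frob Y (fst (F l)) + \<tau> * snd (F l)) = b + 1" using vpos by (simp add: k_def)
    ultimately show False by simp
  qed
  have tge: "0 \<le> frob Y W" if W: "\<forall>v. 0 \<le> frob W (outer v)" for W
  proof (rule ccontr)
    assume "\<not> ?thesis"
    then have neg: "frob Y W < 0" by simp
    define k where "k = (\<bar>\<tau>\<bar> + 1) / (- frob Y W)"
    have kpos: "k > 0" unfolding k_def using neg by (intro divide_pos_pos) auto
    have "(k *\<^sub>R W, -1) \<in> T" using W kpos by (simp add: T_def frob_scaleR_left)
    then have "b \<le> a \<bullet> (k *\<^sub>R W, -1)" using ab(3) by blast
    moreover have "a \<bullet> (k *\<^sub>R W, -1) = k * frob Y W - \<tau>" unfolding ax by (simp add: frob_scaleR_right)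
    moreover have "k * frob Y W = - (\<bar>\<tau>\<bar> + 1)" using neg by (simp add: k_def)
    ultimately show False using b0 by linarith
  qed
  have tau: "\<tau> \<le> 0" using ab(3) TnE b0 unfolding ax by force
  have Fe: "F (\<lambda>j. if j = i then c else 0) = (c *\<^sub>R A i, c * r i)" if "i \<in> {0..m}" for i c
  proof -
    have "(\<Sum>j\<in>{0..m}. (if j = i then c else 0) *\<^sub>R A j) = (\<Sum>j\<in>{0..m}. if j = i then c *\<^sub>R A j else 0)"
      by (rule sum.cong) auto
    moreover have "(\<Sum>j\<in>{0..m}. (if j = i then c else 0) * r j) = (\<Sum>j\<in>{0..m}. if j = i then c * r j else 0)"
      by (rule sum.cong) auto
    ultimately show ?thesis unfolding F_def using that by simp
  qed
  have ineq: "frob Y (A i) + \<tau> * r i \<le> 0" if "i \<in> {0..m}" for i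
  proof -
    have "(\<lambda>j. if j = i then 1 else 0) \<in> L" by (simp add: L_def)
    from gle[OF this] show ?thesis unfolding Fe[OF that] by simp
  qed
  have eqs: "frob Y (A i) + \<tau> * r i \<ge> 0" if "i \<in> {mI+1..m}" for i
  proof -
    have lm: "(\<lambda>j. if j = i then -1 else 0) \<in> L" using that by (simp add: L_def)
    have i0: "i \<in> {0..m}" using that by simp
    from gle[OF lm] show ?thesis unfolding Fe[OF i0, of "-1"] by (simp add: frob_minus_right)
  qed
  show ?thesis
  proof (cases "\<tau> < 0")
    case True
    define Z where "Z = (1 / (-\<tau>)) *\<^sub>R ((1/2) *\<^sub>R (Y + transpose Y))"
    have fZ: "frob (A i) Z = frob Y (A i) / (-\<tau>)" if "i \<in> {0..m}" for i
    proof -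
      have "frob (A i) (transpose Y) = frob (A i) Y" using symA that frob_sym_transpose by blast
      then show ?thesis unfolding Z_def frob_scaleR_right frob_add_right frob_comm[of "A i" Y]
        by simp
    qed
    have symZ: "sym_mat Z" unfolding Z_def by (intro sym_scaleR sym_transpose_add)
    have "0 \<le> v \<bullet> (Z *v v)" for v
    proof -
      have "0 \<le> frob Y (outer v)"
        by (rule tge) (simp add: frob_outer_outer)
      moreover have "frob (transpose Y) (outer v) = frob Y (outer v)"
        by (simp add: frob_transpose transpose_outer)
      ultimately show ?thesis unfolding quad_frob Z_def frob_scaleR_left frob_add_left using True
        by (simp add: divide_nonneg_neg)
    qed
    then have psdZ: "psd Z" using symZ by (simp add: psd_def)
    have negt: "-\<tau> > 0" using True by simp
    have le: "frob (A i) Z \<le> r i" if "i \<in> {0..m}" for i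
    proof -
      have "frob Y (A i) / (-\<tau>) \<le> r i"
        by (subst pos_divide_le_eq[OF negt]) (use ineq[OF that] in \<open>simp add: algebra_simps\<close>)
      then show ?thesis using fZ[OF that] by simp
    qed
    have ge: "r i \<le> frob (A i) Z" if "i \<in> {mI+1..m}" for i
    proof -
      have i0: "i \<in> {0..m}" using that by simp
      have "r i \<le> frob Y (A i) / (-\<tau>)"
        by (subst pos_le_divide_eq[OF negt]) (use eqs[OF that] in \<open>simp add: algebra_simps\<close>)
      then show ?thesis using fZ[OF i0] by simp
    qed
    have "frob (A 0) Z \<le> r 0" using le by simp
    moreover have "\<forall>i\<in>{1..mI}. frob (A i) Z \<le> r i" using le mI by auto
    moreover have "\<forall>i\<in>{mI+1..m}. frob (A i) Z = r i"
      using le ge by (metis atLeastAtMost_iff le0 order_antisym)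
    ultimately show ?thesis using psdZ by blast
  next
    case False
    then have t0: "\<tau> = 0" using tau by simp
    then have Yne: "Y \<noteq> 0" using ab(1) a by (auto simp: zero_prod_def)
    let ?P = "Amat m A g"
    have lg: "(\<lambda>i. if i = 0 then 1 else g i) \<in> L" using gI by (simp add: L_def)
    have "{0..m} = insert 0 {1..m}" by auto
    moreover have "(\<Sum>x\<in>{1..m}. (if x = 0 then 1 else g x) *\<^sub>R A x) = (\<Sum>x\<in>{1..m}. g x *\<^sub>R A x)"
      by (rule sum.cong) auto
    ultimately have FP: "fst (F (\<lambda>i. if i = 0 then 1 else g i)) = ?P"
      unfolding F_def Amat_def by simp
    have YP: "frob Y ?P \<le> 0" using gle[OF lg] FP t0 by simp
    obtain \<mu> where mu: "\<mu> > 0" "\<And>v. \<mu> * (v \<bullet> v) \<le> v \<bullet> (?P *v v)" using pd_uniform[OF gpd] by blast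
    obtain B where B: "B > 0" "\<And>v. \<bar>v \<bullet> (Y *v v)\<bar> \<le> B * (v \<bullet> v)" using quad_bound by blast
    define W where "W = ?P - (\<mu> / B) *\<^sub>R Y"
    have "0 \<le> frob W (outer v)" for v
    proof -
      have "v \<bullet> (Y *v v) \<le> B * (v \<bullet> v)" using B(2)[of v] by simp
      then have "(\<mu> / B) * (v \<bullet> (Y *v v)) \<le> (\<mu> / B) * (B * (v \<bullet> v))"
        using mu B by (intro mult_left_mono) auto
      also have "\<dots> = \<mu> * (v \<bullet> v)" using B by simp
      finally have "(\<mu> / B) * (v \<bullet> (Y *v v)) \<le> v \<bullet> (?P *v v)" using mu(2)[of v] by simp
      moreover have "frob ?P (outer v) = v \<bullet> (?P *v v)" "frob Y (outer v) = v \<bullet> (Y *v v)"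
        by (simp_all add: quad_frob)
      ultimately show ?thesis unfolding W_def frob_diff_left frob_scaleR_left by simp
    qed
    then have "0 \<le> frob Y W" by (rule tge[rule_format])
    then have "(\<mu> / B) * frob Y Y \<le> frob Y ?P"
      unfolding W_def frob_diff_right frob_scaleR_right by simp
    moreover have "frob Y Y > 0" using Yne by (simp flip: inner_frob)
    ultimately have "frob Y ?P > 0" using mu B
      by (metis divide_pos_pos mult_pos_pos order_less_le_trans)
    then show ?thesis using YP by simp
  qed
qed

lemma sum0m: "(\<Sum>i\<in>{0..m::nat}. f i) = f 0 + (\<Sum>i\<in>{1..m}. f i)"
proof -
  have "{0..m} = insert 0 {1..m}" by auto
  then show ?thesis by simp
qed

lemma quad_sum: fixes A :: "nat \<Rightarrow> real^'n^'n"
  shows "v \<bullet> ((\<Sum>i\<in>S. l i *\<^sub>R A i) *v v) = (\<Sum>i\<in>S. l i * (v \<bullet> (A i *v v)))"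
  by (simp add: quad_frob frob_sum_left frob_scaleR_left)

lemma weak_dual:
  fixes A :: "nat \<Rightarrow> real^'n^'n"
  assumes feas: "sdp_feas mI mE A b c x X" and gam: "\<gamma> \<in> Gam mI mE A"
  shows "qgam (mI+mE) A b c \<gamma> x \<le> frob (Qmat A b c 0) (blk 1 x X)"
proof -
  let ?m = "mI + mE"
  define Z where "Z = X - outer x"
  have psdZ: "psd Z" using feas by (simp add: sdp_feas_def psd_blk_iff Z_def)
  let ?q = "\<lambda>i. qf (A i) (b i) (c i) x"
  let ?z = "\<lambda>i. frob (A i) Z"
  have Qi: "frob (Qmat A b c i) (blk 1 x X) = ?q i + ?z i" for i
    by (simp add: frob_Qmat Z_def)
  have hterm: "\<gamma> i * ?q i \<le> - (\<gamma> i * ?z i)" if i: "i \<in> {1..?m}" for i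
  proof (cases "i \<le> mI")
    case True
    have i1: "i \<in> {1..mI}" using True i by auto
    have "frob (Qmat A b c i) (blk 1 x X) \<le> 0" using feas i1 unfolding sdp_feas_def by blast
    moreover have "0 \<le> \<gamma> i" using gam i1 unfolding Gam_def by blast
    ultimately have "?q i + ?z i \<le> 0" "0 \<le> \<gamma> i" using Qi[of i] by auto
    then have "\<gamma> i * (?q i + ?z i) \<le> 0" by (simp add: mult_nonneg_nonpos)
    then show ?thesis by (simp add: algebra_simps)
  next
    case False
    have i1: "i \<in> {mI+1..mI+mE}" using False i by auto
    have "frob (Qmat A b c i) (blk 1 x X) = 0" using feas i1 unfolding sdp_feas_def by blast
    then have "?q i + ?z i = 0" using Qi[of i] by auto
    then have "?q i = - ?z i" by simp
    then show ?thesis by simp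
  qed
  have s1: "(\<Sum>i\<in>{1..?m}. \<gamma> i * ?q i) \<le> - (\<Sum>i\<in>{1..?m}. \<gamma> i * ?z i)"
  proof -
    have "(\<Sum>i\<in>{1..?m}. \<gamma> i * ?q i) \<le> (\<Sum>i\<in>{1..?m}. - (\<gamma> i * ?z i))"
      by (rule sum_mono) (rule hterm)
    then show ?thesis by (simp add: sum_negf)
  qed
  have "psd (Amat ?m A \<gamma>)" using gam by (simp add: Gam_def)
  moreover have "\<forall>v. 0 \<le> v \<bullet> (Z *v v)" using psdZ by (simp add: psd_def)
  ultimately have "0 \<le> frob (Amat ?m A \<gamma>) Z" by (rule psd_frob_nonneg)
  then have s2: "0 \<le> ?z 0 + (\<Sum>i\<in>{1..?m}. \<gamma> i * ?z i)" by (simp add: frob_Amat)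
  show ?thesis unfolding qgam_def Qi using s1 s2 by simp
qed

lemma ratio_sum:
  fixes g l h :: "'a \<Rightarrow> real" and D s l0 h0 :: real
  assumes D: "D = 1 + s * l0" "D \<noteq> 0"
  shows "h0 + (\<Sum>i\<in>S. ((g i + s * l i) / D) * h i)
       = (h0 + (\<Sum>i\<in>S. g i * h i) + s * (l0 * h0 + (\<Sum>i\<in>S. l i * h i))) / D"
proof -
  have "(\<Sum>i\<in>S. ((g i + s * l i) / D) * h i) = ((\<Sum>i\<in>S. g i * h i) + s * (\<Sum>i\<in>S. l i * h i)) / D"
  proof -
    have "(\<Sum>i\<in>S. ((g i + s * l i) / D) * h i) = (\<Sum>i\<in>S. (g i * h i + s * (l i * h i)) / D)"
    proof (rule sum.cong)
      fix i
      have "((g i + s * l i) / D) * h i = ((g i + s * l i) * h i) / D" by simp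
      also have "\<dots> = (g i * h i + s * (l i * h i)) / D" by (simp add: algebra_simps)
      finally show "((g i + s * l i) / D) * h i = (g i * h i + s * (l i * h i)) / D" .
    qed simp
    also have "\<dots> = (\<Sum>i\<in>S. g i * h i + s * (l i * h i)) / D" by (rule sum_divide_distrib[symmetric])
    also have "(\<Sum>i\<in>S. g i * h i + s * (l i * h i)) = (\<Sum>i\<in>S. g i * h i) + s * (\<Sum>i\<in>S. l i * h i)"
      by (simp add: sum.distrib sum_distrib_left)
    finally show ?thesis .
  qed
  then show ?thesis using D by (simp add: field_simps)
qed

lemma hyp_lemma:
  fixes A :: "nat \<Rightarrow> real^'n^'n"
  assumes symA: "\<forall>i\<in>{0..m}. sym_mat (A i)"
    and mI: "mI \<le> m"
    and gI: "\<forall>i\<in>{1..mI}. 0 \<le> g i"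
    and gpd: "pd (Amat m A g)"
    and bound: "\<And>\<gamma>. (\<forall>i. i \<notin> {1..m} \<longrightarrow> \<gamma> i = 0) \<Longrightarrow> psd (Amat m A \<gamma>) \<Longrightarrow> (\<forall>i\<in>{1..mI}. 0 \<le> \<gamma> i)
        \<Longrightarrow> qgam m A b c \<gamma> x \<le> 2 * t"
    and l0: "0 \<le> l 0" and lI: "\<forall>i\<in>{1..mI}. 0 \<le> l i" and psdl: "psd (\<Sum>i\<in>{0..m}. l i *\<^sub>R A i)"
  shows "0 \<le> (\<Sum>i\<in>{0..m}. l i * (if i = 0 then 2 * t - qf (A 0) (b 0) (c 0) x else - qf (A i) (b i) (c i) x))"
proof (rule ccontr)
  let ?q = "\<lambda>i. qf (A i) (b i) (c i) x"
  define \<beta> where "\<beta> = (\<Sum>i\<in>{0..m}. l i * (if i = 0 then 2 * t - ?q 0 else - ?q i))"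
  assume "\<not> 0 \<le> (\<Sum>i\<in>{0..m}. l i * (if i = 0 then 2 * t - ?q 0 else - ?q i))"
  then have bneg: "\<beta> < 0" by (simp add: \<beta>_def)
  have "(\<Sum>i\<in>{1..m}. l i * (if i = 0 then 2 * t - ?q 0 else - ?q i)) = - (\<Sum>i\<in>{1..m}. l i * ?q i)"
    by (simp add: sum_negf[symmetric])
  then have beta: "\<beta> = 2 * t * l 0 - (l 0 * ?q 0 + (\<Sum>i\<in>{1..m}. l i * ?q i))"
    unfolding \<beta>_def sum0m[of _ m] by (simp add: algebra_simps)
  define Q where "Q = qgam m A b c g x"
  have Qdef: "Q = ?q 0 + (\<Sum>i\<in>{1..m}. g i * ?q i)" by (simp add: Q_def qgam_def)
  define s where "s = (\<bar>2 * t - Q\<bar> + 1) / (- \<beta>)"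
  have spos: "0 < s" unfolding s_def using bneg by (intro divide_pos_pos) auto
  have sb: "s * \<beta> = - (\<bar>2 * t - Q\<bar> + 1)" unfolding s_def using bneg by simp
  define D where "D = 1 + s * l 0"
  have Dpos: "0 < D" unfolding D_def using spos l0 by (simp add: add_pos_nonneg)
  define \<gamma> where "\<gamma> = (\<lambda>i. if i \<in> {1..m} then (g i + s * l i) / D else 0)"
  have gsum: "(\<Sum>i\<in>{1..m}. \<gamma> i * h i) = (\<Sum>i\<in>{1..m}. ((g i + s * l i) / D) * h i)" for h
    by (rule sum.cong) (auto simp: \<gamma>_def)
  have psdg: "psd (Amat m A \<gamma>)"
  proof -
    have "0 \<le> v \<bullet> (Amat m A \<gamma> *v v)" for v
    proof -
      let ?a = "\<lambda>i. v \<bullet> (A i *v v)"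
      have e1: "v \<bullet> (Amat m A \<gamma> *v v) = (?a 0 + (\<Sum>i\<in>{1..m}. g i * ?a i) + s * (l 0 * ?a 0 + (\<Sum>i\<in>{1..m}. l i * ?a i))) / D"
        unfolding quad_Amat gsum by (rule ratio_sum) (use D_def Dpos in auto)
      have "0 \<le> v \<bullet> (Amat m A g *v v)" using gpd by (cases "v = 0") (auto simp: pd_def less_imp_le)
      then have n1: "0 \<le> ?a 0 + (\<Sum>i\<in>{1..m}. g i * ?a i)" by (simp add: quad_Amat)
      have "0 \<le> v \<bullet> ((\<Sum>i\<in>{0..m}. l i *\<^sub>R A i) *v v)" using psdl by (simp add: psd_def)
      then have "0 \<le> (\<Sum>i\<in>{0..m}. l i * ?a i)" by (simp only: quad_sum)
      then have n2: "0 \<le> l 0 * ?a 0 + (\<Sum>i\<in>{1..m}. l i * ?a i)" by (simp only: sum0m)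
      show ?thesis unfolding e1 using n1 n2 spos Dpos by simp
    qed
    then show ?thesis using sym_Amat[OF symA] by (simp add: psd_def)
  qed
  have "\<forall>i. i \<notin> {1..m} \<longrightarrow> \<gamma> i = 0" by (simp add: \<gamma>_def)
  moreover have "\<forall>i\<in>{1..mI}. 0 \<le> \<gamma> i" using gI lI spos Dpos mI by (auto simp: \<gamma>_def)
  ultimately have qle: "qgam m A b c \<gamma> x \<le> 2 * t" using bound psdg by blast
  have "qgam m A b c \<gamma> x = (Q + s * (l 0 * ?q 0 + (\<Sum>i\<in>{1..m}. l i * ?q i))) / D"
    unfolding qgam_def gsum Qdef by (rule ratio_sum) (use D_def Dpos in auto)
  with qle Dpos have "Q + s * (l 0 * ?q 0 + (\<Sum>i\<in>{1..m}. l i * ?q i)) \<le> 2 * t * D"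
    by (simp add: divide_le_eq)
  then have "Q + s * (2 * t * l 0 - \<beta>) \<le> 2 * t * (1 + s * l 0)" unfolding D_def beta by simp
  then have "Q - s * \<beta> \<le> 2 * t" by (simp add: algebra_simps)
  then show False unfolding sb by linarith
qed

lemma D_char:
  fixes A :: "nat \<Rightarrow> real^'n^'n"
  assumes symA: "\<forall>i\<in>{0..mI+mE}. sym_mat (A i)"
    and gI: "\<forall>i\<in>{1..mI}. 0 \<le> g i" and gpd: "pd (Amat (mI+mE) A g)"
  shows "(x, t) \<in> D_SDP mI mE A b c \<longleftrightarrow> supq mI mE A b c x \<le> ereal (2 * t)"
proof
  assume "(x, t) \<in> D_SDP mI mE A b c"
  then obtain X where X: "sdp_feas mI mE A b c x X" "frob (Qmat A b c 0) (blk 1 x X) \<le> 2 * t"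
    by (auto simp: D_SDP_def)
  show "supq mI mE A b c x \<le> ereal (2 * t)"
    unfolding supq_def
  proof (rule SUP_least)
    fix \<gamma> assume "\<gamma> \<in> Gam mI mE A"
    then show "ereal (qgam (mI + mE) A b c \<gamma> x) \<le> ereal (2 * t)"
      using weak_dual[OF X(1)] X(2) by force
  qed
next
  let ?m = "mI + mE"
  let ?q = "\<lambda>i. qf (A i) (b i) (c i) x"
  assume "supq mI mE A b c x \<le> ereal (2 * t)"
  then have bnd: "\<And>\<gamma>. \<gamma> \<in> Gam mI mE A \<Longrightarrow> qgam ?m A b c \<gamma> x \<le> 2 * t"
    unfolding supq_def by (simp add: SUP_le_iff)
  define r where "r = (\<lambda>i. if i = 0 then 2 * t - ?q 0 else - ?q i)"
  have "\<exists>Z. psd Z \<and> frob (A 0) Z \<le> r 0 \<and> (\<forall>i\<in>{1..mI}. frob (A i) Z \<le> r i)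
             \<and> (\<forall>i\<in>{mI+1..?m}. frob (A i) Z = r i)"
  proof (rule dual_attain[OF symA _ gI gpd])
    fix l :: "nat \<Rightarrow> real"
    assume l0: "0 \<le> l 0" and lI: "\<forall>i\<in>{1..mI}. 0 \<le> l i" and psdl: "psd (\<Sum>i\<in>{0..?m}. l i *\<^sub>R A i)"
    show "0 \<le> (\<Sum>i\<in>{0..?m}. l i * r i)"
      unfolding r_def
    proof (rule hyp_lemma[OF symA _ gI gpd _ l0 lI psdl])
      fix \<gamma> :: "nat \<Rightarrow> real"
      assume "\<forall>i. i \<notin> {1..?m} \<longrightarrow> \<gamma> i = 0" "psd (Amat ?m A \<gamma>)" "\<forall>i\<in>{1..mI}. 0 \<le> \<gamma> i"
      then have "\<gamma> \<in> Gam mI mE A" by (simp add: Gam_def)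
      then show "qgam ?m A b c \<gamma> x \<le> 2 * t" by (rule bnd)
    qed simp
  qed simp
  then obtain Z where Z: "psd Z" "frob (A 0) Z \<le> r 0" "\<forall>i\<in>{1..mI}. frob (A i) Z \<le> r i"
    "\<forall>i\<in>{mI+1..?m}. frob (A i) Z = r i" by blast
  define X where "X = outer x + Z"
  have XZ: "X - outer x = Z" by (simp add: X_def)
  have symX: "sym_mat X" using Z(1) unfolding X_def psd_def by (simp add: sym_add sym_outer)
  have feas: "sdp_feas mI mE A b c x X"
    unfolding sdp_feas_def
  proof (intro conjI ballI)
    show "sym_mat X" by (rule symX)
    show "psd (blk 1 x X)" using symX Z(1) XZ by (simp add: psd_blk_iff)
  next
    fix i assume i: "i \<in> {1..mI}"
    then have "i \<noteq> 0" by simp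
    then show "frob (Qmat A b c i) (blk 1 x X) \<le> 0"
      using Z(3) i unfolding frob_Qmat XZ r_def by fastforce
  next
    fix i assume i: "i \<in> {mI+1..?m}"
    then have "i \<noteq> 0" by simp
    then show "frob (Qmat A b c i) (blk 1 x X) = 0"
      using Z(4) i unfolding frob_Qmat XZ r_def by fastforce
  qed
  moreover have "frob (Qmat A b c 0) (blk 1 x X) \<le> 2 * t"
    using Z(2) unfolding frob_Qmat XZ r_def by simp
  ultimately show "(x, t) \<in> D_SDP mI mE A b c" unfolding D_SDP_def by blast
qed

lemma qgam_expand:
  fixes A :: "nat \<Rightarrow> real^'n^'n"
  shows "qgam m A b c g x = x \<bullet> (Amat m A g *v x) + 2 * ((b 0 + (\<Sum>i\<in>{1..m}. g i *\<^sub>R b i)) \<bullet> x)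
     + (c 0 + (\<Sum>i\<in>{1..m}. g i * c i))"
  by (simp add: qgam_def qf_def quad_Amat inner_add_left inner_sum_left sum.distrib
      sum_distrib_left algebra_simps)

lemma isCont_mv: "isCont ((*v) (M::real^'n^'n)) x"
  using matrix_vector_mult_linear_continuous_on continuous_on_eq_continuous_at open_UNIV by blast

lemma isCont_mv2[continuous_intros]: "isCont f x \<Longrightarrow> isCont (\<lambda>y. (M::real^'n^'n) *v f y) x"
  by (rule isCont_o2[OF _ isCont_mv])

lemma isCont_qgam:
  fixes A :: "nat \<Rightarrow> real^'n^'n"
  shows "isCont (qgam m A b c g) x"
  unfolding qgam_def[abs_def] qf_def
  by (intro continuous_intros)

lemma feasible_upper:
  fixes A :: "nat \<Rightarrow> real^'n^'n"
  assumes xf: "(\<forall>i\<in>{1..mI}. qf (A i) (b i) (c i) xf \<le> 0) \<and> (\<forall>i\<in>{mI+1..mI+mE}. qf (A i) (b i) (c i) xf = 0)"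
    and gam: "\<gamma> \<in> Gam mI mE A"
  shows "qgam (mI+mE) A b c \<gamma> xf \<le> qf (A 0) (b 0) (c 0) xf"
proof -
  have "\<gamma> i * qf (A i) (b i) (c i) xf \<le> 0" if i: "i \<in> {1..mI+mE}" for i
  proof (cases "i \<le> mI")
    case True
    then have "0 \<le> \<gamma> i" "qf (A i) (b i) (c i) xf \<le> 0" using gam xf i by (auto simp: Gam_def)
    then show ?thesis by (simp add: mult_nonneg_nonpos)
  next
    case False
    then have "qf (A i) (b i) (c i) xf = 0" using xf i by auto
    then show ?thesis by simp
  qed
  then have "(\<Sum>i\<in>{1..mI+mE}. \<gamma> i * qf (A i) (b i) (c i) xf) \<le> 0" by (meson sum_nonpos)
  then show ?thesis by (simp add: qgam_def)
qed

theorem mainTheorem1: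
  fixes mI mE :: nat
    and A :: "nat \<Rightarrow> real^'n^'n" and b :: "nat \<Rightarrow> real^'n" and c :: "nat \<Rightarrow> real"
  assumes m_pos: "mI + mE \<ge> 1"
    and symA: "\<forall>i\<in>{0..mI+mE}. sym_mat (A i)"
    and feasible: "\<exists>x. (\<forall>i\<in>{1..mI}. qf (A i) (b i) (c i) x \<le> 0)
                       \<and> (\<forall>i\<in>{mI+1..mI+mE}. qf (A i) (b i) (c i) x = 0)"
    and slater: "\<exists>\<gamma>s. (\<forall>i\<in>{1..mI}. 0 \<le> \<gamma>s i) \<and> pd (Amat (mI+mE) A \<gamma>s)"
  shows "D_SDP mI mE A b c = {(x, t). supq mI mE A b c x \<le> ereal (2 * t)}
    \<and> (\<exists>x0. (\<forall>x. supq mI mE A b c x0 \<le> supq mI mE A b c x)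
            \<and> Opt_SDP mI mE A b c = supq mI mE A b c x0)"
proof -
  let ?m = "mI + mE"
  let ?F = "supq mI mE A b c"
  obtain g where gI: "\<forall>i\<in>{1..mI}. 0 \<le> g i" and gpd: "pd (Amat ?m A g)" using slater by blast
  have Dc: "(x, t) \<in> D_SDP mI mE A b c \<longleftrightarrow> ?F x \<le> ereal (2 * t)" for x t
    by (rule D_char[OF symA gI gpd])
  have part1: "D_SDP mI mE A b c = {(x, t). ?F x \<le> ereal (2 * t)}"
    using Dc by auto
  define g' where "g' = (\<lambda>i. if i \<in> {1..?m} then g i else 0)"
  have Ag': "Amat ?m A g' = Amat ?m A g" unfolding Amat_def g'_def by (auto intro!: sum.cong)
  have qg': "qgam ?m A b c g' x = qgam ?m A b c g x" for x
    unfolding qgam_def g'_def by (auto intro!: sum.cong)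
  have "psd (Amat ?m A g)" using gpd unfolding pd_def psd_def
    by (metis less_imp_le inner_zero_left order_refl)
  then have g'Gam: "g' \<in> Gam mI mE A" unfolding Gam_def mem_Collect_eq Ag' using gI
    by (auto simp: g'_def)
  have lowF: "ereal (qgam ?m A b c g x) \<le> ?F x" for x
  proof -
    have "ereal (qgam ?m A b c g' x) \<le> ?F x" unfolding supq_def by (rule SUP_upper[OF g'Gam])
    then show ?thesis using qg'[of x] by simp
  qed
  obtain xf where xf: "(\<forall>i\<in>{1..mI}. qf (A i) (b i) (c i) xf \<le> 0) \<and> (\<forall>i\<in>{mI+1..mI+mE}. qf (A i) (b i) (c i) xf = 0)"
    using feasible by blast
  define c0 where "c0 = qf (A 0) (b 0) (c 0) xf"
  have upF: "?F xf \<le> ereal c0"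
    unfolding supq_def c0_def by (rule SUP_least) (use feasible_upper[OF xf] in auto)
  obtain \<mu> where mu: "\<mu> > 0" "\<And>v. \<mu> * (v \<bullet> v) \<le> v \<bullet> (Amat ?m A g *v v)" using pd_uniform[OF gpd] by blast
  define bg where "bg = b 0 + (\<Sum>i\<in>{1..?m}. g i *\<^sub>R b i)"
  define cg where "cg = c 0 + (\<Sum>i\<in>{1..?m}. g i * c i)"
  define Bn where "Bn = norm bg"
  have qlow: "\<mu> * (norm x)^2 - 2 * Bn * norm x + cg \<le> qgam ?m A b c g x" for x
  proof -
    have "\<bar>bg \<bullet> x\<bar> \<le> Bn * norm x" unfolding Bn_def by (rule Cauchy_Schwarz_ineq2)
    moreover have "\<mu> * (norm x)^2 \<le> x \<bullet> (Amat ?m A g *v x)" using mu(2)[of x] by (simp add: power2_norm_eq_inner)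
    ultimately show ?thesis unfolding qgam_expand bg_def[symmetric] cg_def[symmetric] by linarith
  qed
  define L where "L = cg - Bn^2 / \<mu>"
  have lowq: "L \<le> qgam ?m A b c g x" for x
  proof -
    have "0 \<le> (\<mu> * norm x - Bn)^2 / \<mu>" using mu(1) by simp
    also have "(\<mu> * norm x - Bn)^2 / \<mu> = \<mu> * (norm x)^2 - 2 * Bn * norm x + Bn^2 / \<mu>"
      using mu(1) by (simp add: field_simps power2_eq_square)
    finally show ?thesis using qlow[of x] unfolding L_def by linarith
  qed
  define R where "R = max 1 ((2 * Bn + \<bar>c0 + 1 - cg\<bar>) / \<mu>)"
  have bndR: "norm x \<le> R" if qx: "qgam ?m A b c g x \<le> c0 + 1" for x
  proof (rule ccontr)
    assume "\<not> norm x \<le> R"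
    then have nR: "norm x > R" by simp
    then have n1: "norm x > 1" unfolding R_def by simp
    have "\<mu> * (norm x)^2 \<le> 2 * Bn * norm x + \<bar>c0 + 1 - cg\<bar>" using qlow[of x] qx by linarith
    also have "\<dots> \<le> 2 * Bn * norm x + \<bar>c0 + 1 - cg\<bar> * norm x" using n1 by (simp add: mult_le_cancel_left1)
    finally have "(\<mu> * norm x) * norm x \<le> (2 * Bn + \<bar>c0 + 1 - cg\<bar>) * norm x"
      by (simp add: power2_eq_square algebra_simps)
    moreover have np: "0 < norm x" using n1 by linarith
    ultimately have "\<mu> * norm x \<le> 2 * Bn + \<bar>c0 + 1 - cg\<bar>"
      by (rule mult_right_le_imp_le)
    then have "norm x \<le> (2 * Bn + \<bar>c0 + 1 - cg\<bar>) / \<mu>" using mu(1) by (simp add: field_simps)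
    then show False using nR unfolding R_def by simp
  qed
  define V where "V = (INF x. ?F x)"
  have "V \<le> ?F xf" unfolding V_def by (rule INF_lower) simp
  then have V1: "V \<le> ereal c0" using upF by (rule order_trans)
  have V2: "ereal L \<le> V" unfolding V_def
  proof (rule INF_greatest)
    fix x
    have "ereal L \<le> ereal (qgam ?m A b c g x)" using lowq[of x] by simp
    then show "ereal L \<le> ?F x" using lowF[of x] by (rule order_trans)
  qed
  obtain v where v: "V = ereal v" using V1 V2 by (cases V) auto
  have "\<exists>y. ?F y < ereal (v + inverse (real (Suc k)))" for k
  proof -
    have "V < ereal (v + inverse (real (Suc k)))" using v by simp
    then show ?thesis unfolding V_def by (simp add: INF_less_iff)
  qed
  then have "\<forall>k. \<exists>y. ?F y < ereal (v + inverse (real (Suc k)))" by blast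
  then have "\<exists>xs. \<forall>k. ?F (xs k) < ereal (v + inverse (real (Suc k)))" by (rule choice)
  then obtain xs where xs: "\<And>k. ?F (xs k) < ereal (v + inverse (real (Suc k)))" by blast
  have xsq: "qgam ?m A b c \<gamma> (xs k) < v + inverse (real (Suc k))" if "\<gamma> \<in> Gam mI mE A" for \<gamma> k
  proof -
    have "ereal (qgam ?m A b c \<gamma> (xs k)) \<le> ?F (xs k)" unfolding supq_def using that by (rule SUP_upper)
    then have "ereal (qgam ?m A b c \<gamma> (xs k)) < ereal (v + inverse (real (Suc k)))"
      using xs[of k] by (rule le_less_trans)
    then show ?thesis by simp
  qed
  have vc0: "v \<le> c0" using V1 v by simp
  have xsball: "xs k \<in> cball 0 R" for k
  proof -
    have "qgam ?m A b c g (xs k) < v + inverse (real (Suc k))" using xsq[OF g'Gam, of k] qg' by simp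
    moreover have "inverse (real (Suc k)) \<le> 1" by (simp add: inverse_le_1_iff)
    ultimately have "qgam ?m A b c g (xs k) \<le> c0 + 1" using vc0 by linarith
    then show ?thesis using bndR by simp
  qed
  obtain x0 r where x0: "strict_mono r" "(xs \<circ> r) \<longlonglongrightarrow> x0"
  proof -
    have "\<forall>n. xs n \<in> cball 0 R" using xsball by blast
    from seq_compactE[OF compact_imp_seq_compact[OF compact_cball] this] that show ?thesis by blast
  qed
  have x0le: "qgam ?m A b c \<gamma> x0 \<le> v" if gam: "\<gamma> \<in> Gam mI mE A" for \<gamma>
  proof -
    have l1: "(\<lambda>k. qgam ?m A b c \<gamma> ((xs \<circ> r) k)) \<longlonglongrightarrow> qgam ?m A b c \<gamma> x0"
      by (rule isCont_tendsto_compose[OF isCont_qgam x0(2)])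
    have l2: "((\<lambda>k. v + inverse (real (Suc k))) \<circ> r) \<longlonglongrightarrow> v"
      by (rule LIMSEQ_subseq_LIMSEQ[OF LIMSEQ_inverse_real_of_nat_add x0(1)])
    show ?thesis
    proof (rule LIMSEQ_le[OF l1 l2])
      show "\<exists>N. \<forall>n\<ge>N. qgam ?m A b c \<gamma> ((xs \<circ> r) n) \<le> ((\<lambda>k. v + inverse (real (Suc k))) \<circ> r) n"
        using xsq[OF gam] by (auto intro: less_imp_le)
    qed
  qed
  have Fx0: "?F x0 \<le> ereal v" unfolding supq_def
    by (rule SUP_least) (use x0le in auto)
  have minim: "\<forall>x. ?F x0 \<le> ?F x"
  proof
    fix x have "V \<le> ?F x" unfolding V_def by (rule INF_lower) simp
    then show "?F x0 \<le> ?F x" using Fx0 v by simp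
  qed
  obtain w where w: "?F x0 = ereal w" using Fx0 lowF[of x0] by (cases "?F x0") auto
  have "Opt_SDP mI mE A b c = ?F x0"
  proof (rule antisym)
    have "(x0, w / 2) \<in> D_SDP mI mE A b c" using Dc w by simp
    then obtain X where X: "sdp_feas mI mE A b c x0 X" "frob (Qmat A b c 0) (blk 1 x0 X) \<le> w"
      by (auto simp: D_SDP_def)
    then have "Opt_SDP mI mE A b c \<le> ereal (frob (Qmat A b c 0) (blk 1 x0 X))"
      unfolding Opt_SDP_def by (intro Inf_lower) blast
    also have "\<dots> \<le> ereal w" using X(2) by simp
    finally show "Opt_SDP mI mE A b c \<le> ?F x0" using w by simp
  next
    show "?F x0 \<le> Opt_SDP mI mE A b c"
      unfolding Opt_SDP_def
    proof (rule Inf_greatest)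
      fix y assume "y \<in> {ereal (frob (Qmat A b c 0) (blk 1 x X)) |x X. sdp_feas mI mE A b c x X}"
      then obtain x X where y: "y = ereal (frob (Qmat A b c 0) (blk 1 x X))" "sdp_feas mI mE A b c x X"
        by blast
      have "(x, frob (Qmat A b c 0) (blk 1 x X) / 2) \<in> D_SDP mI mE A b c"
        unfolding D_SDP_def using y(2) by auto
      then have "?F x \<le> y" using Dc y(1) by simp
      then show "?F x0 \<le> y" using minim by (metis order_trans)
    qed
  qed
  then show ?thesis using part1 minim by blast
qed

end
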